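(* Let $k,\ell\ge2$ be integers. The sequence $(g_{k,\ell}(n))_{n\ge0}$ is $k$-synchronized if and only if $k=\ell$.
   Context: For integers $k,\ell\ge 2$ define $g_{k,\ell}(0)=1$ and $g_{k,\ell}(n)=1+\ell^{\lfloor \log_k n\rfloor}$ for $n>0$. A sequence $(f(n))_{n\ge0}$ of natural numbers is $k$-synchronized if there is a deterministic finite automaton accepting exactly the set of words $(n,m)_k$ with $m=f(n)$, where $(n,m)_k$ denotes the word over the alphabet of digit pairs obtained by writing $n$ and $m$ in base $k$, padding the shorter representation with leading zeros, and reading the digits in parallel. *)

theory Defs
  imports Complex_Main
begin

text \<open>Base-k digits, most significant first; 0 is represented by the empty word.\<close>
function base_digits :: "nat \<Rightarrow> nat \<Rightarrow> nat list" where
  "base_digits k n = (if n = 0 \<or> k < 2 then [] else base_digits k (n div k) @ [n mod k])"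
  by auto
termination
  by (relation "measure snd") auto

definition pad_to :: "nat \<Rightarrow> nat list \<Rightarrow> nat list" where
  "pad_to L xs = replicate (L - length xs) 0 @ xs"

definition pair_word :: "nat \<Rightarrow> nat \<Rightarrow> nat \<Rightarrow> (nat \<times> nat) list" where
  "pair_word k n m =
     (let L = max (length (base_digits k n)) (length (base_digits k m))
      in zip (pad_to L (base_digits k n)) (pad_to L (base_digits k m)))"

definition k_synchronized :: "nat \<Rightarrow> (nat \<Rightarrow> nat) \<Rightarrow> bool" where
  "k_synchronized k f \<longleftrightarrow>
     (\<exists>(Q :: nat set) q0 (\<delta> :: nat \<Rightarrow> nat \<times> nat \<Rightarrow> nat) F.
        finite Q \<and> q0 \<in> Q \<and> F \<subseteq> Q \<and>
        (\<forall>q\<in>Q. \<forall>a<k. \<forall>b<k. \<delta> q (a, b) \<in> Q) \<and>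
        (\<forall>w. set w \<subseteq> {(a, b). a < k \<and> b < k} \<longrightarrow>
             (foldl \<delta> q0 w \<in> F \<longleftrightarrow> (\<exists>n. w = pair_word k n (f n)))))"

definition g_seq :: "nat \<Rightarrow> nat \<Rightarrow> nat \<Rightarrow> nat" where
  "g_seq k l n = (if n = 0 then 1 else 1 + l ^ nat \<lfloor>log (real k) (real n)\<rfloor>)"

end

theory Submission
  imports Defs
begin


declare base_digits.simps[simp del]

definition dval :: "nat \<Rightarrow> nat list \<Rightarrow> nat" where
  "dval k ds = foldl (\<lambda>a d. a * k + d) 0 ds"

lemma dval_Nil[simp]: "dval k [] = 0" by (simp add: dval_def)
lemma dval_snoc[simp]: "dval k (ds @ [d]) = dval k ds * k + d" by (simp add: dval_def)

lemma dval_single[simp]: "dval k [d] = d" by (simp add: dval_def)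

lemma dval_zero_iff: "k > 0 \<Longrightarrow> dval k ds = 0 \<longleftrightarrow> (\<forall>x\<in>set ds. x = 0)"
  by (induction ds rule: rev_induct) auto

lemma dval_zeros_app: "(\<forall>x\<in>set zs. x = 0) \<Longrightarrow> dval k (zs @ ds) = dval k ds"
proof (induction ds rule: rev_induct)
  case Nil
  then show ?case by (induction zs rule: rev_induct) auto
next
  case (snoc x xs)
  then show ?case by (simp flip: append_assoc)
qed

lemma bd_0[simp]: "base_digits k 0 = []" by (simp add: base_digits.simps)
lemma bd_pos: "k \<ge> 2 \<Longrightarrow> n > 0 \<Longrightarrow> base_digits k n = base_digits k (n div k) @ [n mod k]"
  by (subst base_digits.simps) auto

lemma bd_dval: "k \<ge> 2 \<Longrightarrow> dval k (base_digits k n) = n"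
proof (induction k n rule: base_digits.induct)
  case (1 k n)
  show ?case
  proof (cases "n = 0")
    case False
    then show ?thesis using 1 bd_pos[of k n] by simp
  qed simp
qed

lemma bd_digits: "k \<ge> 2 \<Longrightarrow> x \<in> set (base_digits k n) \<Longrightarrow> x < k"
proof (induction k n rule: base_digits.induct)
  case (1 k n)
  show ?case
  proof (cases "n = 0")
    case False
    then show ?thesis using 1 bd_pos[of k n] by auto
  qed (use 1 in simp)
qed

lemma bd_len_upper: "k \<ge> 2 \<Longrightarrow> n < k ^ length (base_digits k n)"
proof (induction k n rule: base_digits.induct)
  case (1 k n)
  show ?case
  proof (cases "n = 0")
    case False
    then have "n div k < k ^ length (base_digits k (n div k))" using 1 by auto
    then have "n div k + 1 \<le> k ^ length (base_digits k (n div k))" by simp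
    then have "(n div k + 1) * k \<le> k ^ length (base_digits k (n div k)) * k" using mult_le_mono1 by blast
    moreover have "n < (n div k + 1) * k" using 1(2)
      by (metis add.commute div_mult_mod_eq mod_less_divisor mult_Suc not_numeral_le_zero not_gr0 add_less_mono1 plus_1_eq_Suc)
    ultimately show ?thesis using False bd_pos[OF 1(2)] by (simp add: mult.commute)
  qed simp
qed

lemma bd_len_lower: "k \<ge> 2 \<Longrightarrow> n > 0 \<Longrightarrow> k ^ (length (base_digits k n) - 1) \<le> n"
proof (induction k n rule: base_digits.induct)
  case (1 k n)
  show ?case
  proof (cases "n div k = 0")
    case True
    then show ?thesis using 1 bd_pos[of k n] by simp
  next
    case False
    then have "k ^ (length (base_digits k (n div k)) - 1) \<le> n div k" using 1 by auto
    moreover have "base_digits k (n div k) \<noteq> []" using False bd_pos[of k "n div k"] 1 by auto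
    ultimately have "k ^ (length (base_digits k (n div k))) \<le> n div k * k"
      by (metis One_nat_def Suc_pred length_greater_0_conv mult_le_mono1 power_Suc2)
    also have "\<dots> \<le> n" by simp
    finally show ?thesis using bd_pos[of k n] 1 by simp
  qed
qed

lemma bd_len_le_iff: "k \<ge> 2 \<Longrightarrow> length (base_digits k n) \<le> d \<longleftrightarrow> n < k ^ d"
proof
  assume "k \<ge> 2" "length (base_digits k n) \<le> d"
  then show "n < k ^ d" using bd_len_upper[of k n]
    by (metis less_le_trans one_le_numeral order.trans power_increasing)
next
  assume k: "k \<ge> 2" and "n < k ^ d"
  show "length (base_digits k n) \<le> d"
  proof (rule ccontr)
    assume nt: "\<not> length (base_digits k n) \<le> d"
    then have "d \<le> length (base_digits k n) - 1" by simp
    then have "k ^ d \<le> k ^ (length (base_digits k n) - 1)" using k by (simp add: power_increasing)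
    moreover have "n > 0" using nt by (cases "n = 0") auto
    ultimately show False using bd_len_lower[OF k] \<open>n < k ^ d\<close> by (meson leD le_trans)
  qed
qed

lemma bd_hd: "k \<ge> 2 \<Longrightarrow> base_digits k n \<noteq> [] \<Longrightarrow> hd (base_digits k n) \<noteq> 0"
proof (induction k n rule: base_digits.induct)
  case (1 k n)
  have n: "n > 0" using 1 by (cases "n = 0") auto
  show ?case
  proof (cases "n div k = 0")
    case True
    then have "n mod k = n" by (metis div_mult_mod_eq mult_0 add_0)
    then show ?thesis using True bd_pos[of k n] 1 n by simp
  next
    case False
    then have "base_digits k (n div k) \<noteq> []" using bd_pos[of k "n div k"] 1 by auto
    then show ?thesis using 1 n bd_pos[of k n] by simp
  qed
qed

lemma dval_bd: "k \<ge> 2 \<Longrightarrow> (ds = [] \<or> hd ds \<noteq> 0) \<Longrightarrow> (\<forall>x\<in>set ds. x < k) \<Longrightarrow> base_digits k (dval k ds) = ds"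
proof (induction ds rule: rev_induct)
  case Nil
  then show ?case by simp
next
  case (snoc d ds)
  show ?case
  proof (cases "ds = []")
    case True
    then have "d \<noteq> 0" "d < k" using snoc by auto
    then show ?thesis using True bd_pos[of k d] snoc by simp
  next
    case False
    then have h: "hd ds \<noteq> 0" using snoc by simp
    then have "dval k ds \<noteq> 0" using dval_zero_iff[of k ds] snoc False by (metis hd_in_set not_numeral_le_zero not_gr0)
    then have p: "dval k ds * k + d > 0" using snoc by simp
    have "d < k" using snoc by simp
    then have "(dval k ds * k + d) div k = dval k ds" "(dval k ds * k + d) mod k = d" by auto
    then show ?thesis using bd_pos[OF snoc(2) p] snoc False h by simp
  qed
qed



abbreviation "len k n \<equiv> length (base_digits k n)"

lemma pad_len: "length xs \<le> L \<Longrightarrow> length (pad_to L xs) = L"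
  by (simp add: pad_to_def)

lemma pw_props:
  fixes k n m :: nat
  defines "L \<equiv> max (len k n) (len k m)"
  shows "length (pair_word k n m) = L"
    "map fst (pair_word k n m) = pad_to L (base_digits k n)"
    "map snd (pair_word k n m) = pad_to L (base_digits k m)"
  unfolding pair_word_def Let_def L_def[symmetric]
  by (simp_all add: pad_len L_def)

lemma dval_pad: "dval k (pad_to L ds) = dval k ds"
  unfolding pad_to_def by (rule dval_zeros_app) simp

lemma pw_fst: "k \<ge> 2 \<Longrightarrow> dval k (map fst (pair_word k n m)) = n"
  by (simp add: pw_props dval_pad bd_dval)
lemma pw_snd: "k \<ge> 2 \<Longrightarrow> dval k (map snd (pair_word k n m)) = m"
  by (simp add: pw_props dval_pad bd_dval)

lemma pw_alpha: assumes "k \<ge> 2" shows "set (pair_word k n m) \<subseteq> {(a, b). a < k \<and> b < k}"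
proof
  fix p assume p: "p \<in> set (pair_word k n m)"
  then have "fst p \<in> set (map fst (pair_word k n m))" "snd p \<in> set (map snd (pair_word k n m))" by auto
  then have "fst p < k" "snd p < k" unfolding pw_props pad_to_def using bd_digits[OF assms] assms by auto
  then show "p \<in> {(a, b). a < k \<and> b < k}" by (cases p) auto
qed

lemma g_len: assumes "k \<ge> 2" "n > 0" shows "g_seq k l n = 1 + l ^ (len k n - 1)"
proof -
  have ne: "len k n > 0" using bd_pos[OF assms] by simp
  have e: "len k n - 1 + 1 = len k n" using ne by simp
  have "\<lfloor>log (real k) (real n)\<rfloor> = int (len k n - 1)"
    using floor_log_nat_eq_if[of k "len k n - 1" n] bd_len_lower[OF assms] bd_len_upper[OF assms(1), of n] assms
    unfolding e by blast
  then have "nat \<lfloor>log (real k) (real n)\<rfloor> = len k n - 1" by simp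
  then show ?thesis using assms by (simp add: g_seq_def)
qed


lemma foldl_in: "(\<forall>q\<in>Q. \<forall>a<k. \<forall>b<k. \<delta> q (a, b) \<in> Q) \<Longrightarrow> q \<in> Q \<Longrightarrow> set w \<subseteq> {(a, b). a < k \<and> b < k} \<Longrightarrow> foldl \<delta> q w \<in> Q"
  by (induction w arbitrary: q) auto

lemma pump:
  fixes Q :: "nat set" and \<delta> :: "nat \<Rightarrow> nat \<times> nat \<Rightarrow> nat" and proj :: "nat \<times> nat \<Rightarrow> nat"
  assumes k: "k \<ge> 2" and fin: "finite Q" and q0: "q0 \<in> Q"
    and cl: "\<forall>q\<in>Q. \<forall>a<k. \<forall>b<k. \<delta> q (a, b) \<in> Q"
    and acc: "\<forall>w. set w \<subseteq> {(a, b). a < k \<and> b < k} \<longrightarrow>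
             (foldl \<delta> q0 w \<in> F \<longleftrightarrow> (\<exists>n. w = pair_word k n (f n)))"
    and w: "w = pair_word k n (f n)"
    and c: "card Q < c" "c \<le> length w"
    and z: "\<forall>x\<in>set (take c w). proj x = 0"
  shows "\<exists>w' n'. w' = pair_word k n' (f n') \<and> length w' < length w \<and> dval k (map proj w') = dval k (map proj w)"
proof -
  let ?A = "{(a, b). a < k \<and> b < k}"
  have wa: "set w \<subseteq> ?A" using w pw_alpha[OF k] by simp
  define s where "s i = foldl \<delta> q0 (take i w)" for i
  have "set (take i w) \<subseteq> ?A" for i using set_take_subset[of i w] wa by (rule order_trans)
  then have "s i \<in> Q" for i unfolding s_def by (rule foldl_in[OF cl q0])
  then have "s ` {0..card Q} \<subseteq> Q" by blast
  moreover have "\<not> card {0..card Q} \<le> card Q" by simp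
  ultimately have "\<not> inj_on s {0..card Q}" using card_inj_on_le fin by blast
  then obtain i j where ij: "i \<in> {0..card Q}" "j \<in> {0..card Q}" "i \<noteq> j" "s i = s j"
    unfolding inj_on_def by blast
  then obtain i j where ij: "i < j" "j \<le> card Q" "s i = s j"
    by (metis atLeastAtMost_iff linorder_neqE_nat)
  have jw: "j < length w" using ij c by simp
  define u where "u = take i w"
  define x where "x = drop j w"
  have split: "w = take j w @ x" unfolding x_def by simp
  have tji: "take j w = u @ drop i (take j w)" unfolding u_def using ij
    by (metis append_take_drop_id min.absorb1 less_imp_le take_take)
  have "foldl \<delta> q0 (u @ x) = foldl \<delta> (s i) x" unfolding u_def s_def by simp
  also have "\<dots> = foldl \<delta> (s j) x" using ij by simp
  also have "\<dots> = foldl \<delta> q0 w" unfolding s_def by (subst (2) split) (simp only: foldl_append)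
  finally have eq: "foldl \<delta> q0 (u @ x) = foldl \<delta> q0 w" .
  have ua: "set (u @ x) \<subseteq> ?A" using wa unfolding u_def x_def
    using set_take_subset[of i w] set_drop_subset[of j w] by auto
  have "\<exists>n. w = pair_word k n (f n)" using w by blast
  then have "foldl \<delta> q0 w \<in> F" using acc wa by blast
  then have "foldl \<delta> q0 (u @ x) \<in> F" using eq by simp
  then obtain n' where n': "u @ x = pair_word k n' (f n')" using acc ua by blast
  have lens: "length (u @ x) < length w" unfolding u_def x_def using ij jw by simp
  have sj: "set (take j w) \<subseteq> set (take c w)" by (rule set_take_subset_set_take) (use ij c in simp)
  have si: "set (take i w) \<subseteq> set (take c w)" by (rule set_take_subset_set_take) (use ij c in simp)
  have zi: "\<forall>y\<in>set (map proj u). y = 0" unfolding u_def using z si by auto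
  have zj: "\<forall>y\<in>set (map proj (take j w)). y = 0" using z sj by auto
  have "dval k (map proj (u @ x)) = dval k (map proj x)" using zi dval_zeros_app by simp
  also have "\<dots> = dval k (map proj w)" using zj dval_zeros_app split
    by (metis map_append)
  finally show ?thesis using n' lens by blast
qed



lemma len_pow: assumes "k \<ge> 2" shows "len k (k ^ j) = j + 1"
proof -
  have "len k (k ^ j) \<le> j + 1" using bd_len_le_iff[OF assms] assms by simp
  moreover have "\<not> len k (k ^ j) \<le> j" using bd_len_le_iff[OF assms] by simp
  ultimately show ?thesis by simp
qed

lemma take_rep: "c \<le> r \<Longrightarrow> take c (replicate r (0::nat) @ ys) = replicate c 0"
  by (simp add: take_append)

lemma zero_prefix:
  assumes "map proj w = replicate r 0 @ ys" "c \<le> r"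
  shows "\<forall>x\<in>set (take c w). proj x = (0::nat)"
proof
  fix x assume "x \<in> set (take c w)"
  then have "proj x \<in> set (take c (map proj w))" by (metis image_eqI set_map take_map)
  then show "proj x = 0" using assms take_rep by (simp add: take_append)
qed

lemma necessity:
  assumes k: "k \<ge> 2" and l: "l \<ge> 2" and sync: "k_synchronized k (g_seq k l)"
  shows "k = l"
proof (rule ccontr)
  assume ne: "k \<noteq> l"
  obtain Q q0 \<delta> F where fin: "finite (Q :: nat set)" and q0: "q0 \<in> Q"
    and cl: "\<forall>q\<in>Q. \<forall>a<k. \<forall>b<k. (\<delta> :: nat \<Rightarrow> nat \<times> nat \<Rightarrow> nat) q (a, b) \<in> Q"
    and acc: "\<forall>w. set w \<subseteq> {(a, b). a < k \<and> b < k} \<longrightarrow>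
             (foldl \<delta> q0 w \<in> F \<longleftrightarrow> (\<exists>n. w = pair_word k n (g_seq k l n)))"
    using sync unfolding k_synchronized_def by blast
  define N where "N = card Q"
  show False
  proof (cases "k < l")
    case True
    have "1 < real l / real k" using True k by simp
    then obtain j where j: "real (k ^ (N + 1)) < (real l / real k) ^ j" using real_arch_pow by blast
    have "real (k ^ (N + 1)) * real k ^ j < real l ^ j"
      using j k by (simp add: power_divide pos_less_divide_eq)
    then have lj: "k ^ (N + 1 + j) < l ^ j"
      by (metis of_nat_less_iff of_nat_mult of_nat_power power_add)
    define n where "n = k ^ j"
    have n0: "n > 0" using k n_def by simp
    have ln: "len k n = j + 1" unfolding n_def by (rule len_pow[OF k])
    define m where "m = g_seq k l n"
    have m: "m = 1 + l ^ j" using g_len[OF k n0, of l] ln m_def by simp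
    have "\<not> len k m \<le> j + N + 1" using bd_len_le_iff[OF k] m lj
      by (simp add: add.commute add.left_commute)
    then have lm: "len k m > j + N + 1" by simp
    define w where "w = pair_word k n m"
    have lw: "length w = len k m" using pw_props(1)[of k n m] ln lm w_def by simp
    have mf: "map fst w = replicate (len k m - len k n) 0 @ base_digits k n"
      using pw_props(2)[of k n m] ln lm w_def by (simp add: pad_to_def)
    have z: "\<forall>x\<in>set (take (N + 1) w). fst x = 0"
      by (rule zero_prefix[OF mf]) (use ln lm in simp)
    obtain w' n' where w': "w' = pair_word k n' (g_seq k l n')" "length w' < length w"
      "dval k (map fst w') = dval k (map fst w)"
      using pump[OF k fin q0 cl acc, of w n "N + 1" fst] w_def m_def z lw lm N_def by auto
    have "n' = n" using w'(3) pw_fst[OF k] w'(1) w_def by simp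
    then show False using w' w_def m_def by simp
  next
    case False
    then have lk: "l < k" using ne by simp
    have "1 < real k / real l" using lk l by simp
    then obtain j where j: "real (2 * k ^ (N + 1)) < (real k / real l) ^ j" using real_arch_pow by blast
    have "real (2 * k ^ (N + 1)) * real l ^ j < real k ^ j"
      using j l by (simp add: power_divide pos_less_divide_eq)
    then have kj: "2 * k ^ (N + 1) * l ^ j < k ^ j"
      by (simp only: of_nat_mult[symmetric] of_nat_power[symmetric] of_nat_less_iff)
    define n where "n = k ^ j"
    have n0: "n > 0" using k n_def by simp
    have ln: "len k n = j + 1" unfolding n_def by (rule len_pow[OF k])
    define m where "m = g_seq k l n"
    have m: "m = 1 + l ^ j" using g_len[OF k n0, of l] ln m_def by simp
    have "m \<le> 2 * l ^ j" using m l by simp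
    then have "k ^ (N + 1) * m \<le> k ^ (N + 1) * (2 * l ^ j)" by (rule mult_le_mono2)
    also have "\<dots> = 2 * k ^ (N + 1) * l ^ j" by simp
    finally have km: "k ^ (N + 1) * m < k ^ j" using kj by linarith
    have "N + 1 \<le> j"
    proof (rule ccontr)
      assume "\<not> N + 1 \<le> j"
      then have "k ^ j \<le> k ^ (N + 1)" using k by (intro power_increasing) auto
      moreover have "k ^ (N + 1) \<le> k ^ (N + 1) * m" using m by simp
      ultimately show False using km by (meson le_less_trans less_irrefl order_trans)
    qed
    then obtain r where r: "j = N + 1 + r" using le_Suc_ex by blast
    have "k ^ (N + 1) * m < k ^ (N + 1) * k ^ r" using km r by (simp add: power_add)
    then have "m < k ^ r" by simp
    then have lmr: "len k m \<le> r" using bd_len_le_iff[OF k] by simp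
    define w where "w = pair_word k n m"
    have lw: "length w = len k n" using pw_props(1)[of k n m] ln lmr r w_def by simp
    have ms: "map snd w = replicate (len k n - len k m) 0 @ base_digits k m"
      using pw_props(3)[of k n m] ln lmr r w_def by (simp add: pad_to_def)
    have z: "\<forall>x\<in>set (take (N + 1) w). snd x = 0"
      by (rule zero_prefix[OF ms]) (use ln lmr r in simp)
    obtain w' n' where w': "w' = pair_word k n' (g_seq k l n')" "length w' < length w"
      "dval k (map snd w') = dval k (map snd w)"
      using pump[OF k fin q0 cl acc, of w n "N + 1" snd] w_def m_def z lw ln r N_def by auto
    have gn': "g_seq k l n' = m" using w'(3) pw_snd[OF k] w'(1) w_def by simp
    have ln': "len k n' < len k n" using w'(1,2) pw_props(1)[of k n' "g_seq k l n'"] lw by simp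
    show False
    proof (cases "n' = 0")
      case True
      then show ?thesis using gn' m l by (simp add: g_seq_def)
    next
      case False
      then have "1 + l ^ (len k n' - 1) = 1 + l ^ j" using g_len[OF k, of n' l] gn' m by simp
      then have "len k n' - 1 = j" using l by (simp add: power_inject_exp)
      moreover have "len k n' > 0" using bd_pos[OF k, of n'] False
        by (metis length_append_singleton zero_less_Suc neq0_conv)
      ultimately show ?thesis using ln' ln by linarith
    qed
  qed
qed



definition dstep :: "nat \<Rightarrow> nat \<Rightarrow> nat \<times> nat \<Rightarrow> nat" where
  "dstep k q p = (if q = 0 then (if fst p = 0 \<and> snd p = 1 then 1 else if fst p \<noteq> 0 \<and> snd p = 1 then 2
      else if fst p \<noteq> 0 \<and> snd p = 2 then 4 else 6)
    else if q = 1 then (if k = 2 \<and> p = (1, 0) then 5 else 6)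
    else if q = 2 then (if snd p = 0 then 2 else if snd p = 1 then 3 else 6)
    else 6)"

definition FF :: "nat set" where "FF = {1, 3, 4, 5}"

lemma fold6: "foldl (dstep k) 6 w = 6"
  by (induction w) (auto simp: dstep_def)

lemma S3: "q \<ge> 3 \<Longrightarrow> foldl (dstep k) q w \<in> FF \<longleftrightarrow> w = [] \<and> q \<in> FF"
  by (cases w) (auto simp: dstep_def fold6 FF_def)

lemma S1: "foldl (dstep k) 1 w \<in> FF \<longleftrightarrow> w = [] \<or> (k = 2 \<and> w = [(1, 0)])"
proof (cases w)
  case (Cons p w')
  show ?thesis
  proof (cases "k = 2 \<and> p = (1, 0)")
    case True
    then show ?thesis using Cons S3[of 5 k w'] by (auto simp: dstep_def FF_def)
  next
    case False
    then show ?thesis using Cons by (auto simp: dstep_def fold6 FF_def)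
  qed
qed (simp add: FF_def)

lemma S2: "foldl (dstep k) 2 w \<in> FF \<longleftrightarrow> (\<exists>ys y. w = ys @ [(y, 1)] \<and> (\<forall>p\<in>set ys. snd p = 0))"
proof (induction w)
  case Nil
  then show ?case by (simp add: FF_def)
next
  case (Cons p w)
  show ?case
  proof (cases "snd p = 0")
    case True
    then have "foldl (dstep k) 2 (p # w) = foldl (dstep k) 2 w" by (simp add: dstep_def)
    moreover have "(\<exists>ys y. p # w = ys @ [(y, 1)] \<and> (\<forall>p\<in>set ys. snd p = 0)) \<longleftrightarrow>
        (\<exists>ys y. w = ys @ [(y, 1)] \<and> (\<forall>p\<in>set ys. snd p = 0))"
    proof
      assume "\<exists>ys y. p # w = ys @ [(y, 1)] \<and> (\<forall>p\<in>set ys. snd p = 0)"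
      then obtain ys y where h: "p # w = ys @ [(y, 1)]" "\<forall>p\<in>set ys. snd p = 0" by blast
      then have "ys \<noteq> []" using True by auto
      then obtain ys' where "ys = p # ys'" using h by (cases ys) auto
      then show "\<exists>ys y. w = ys @ [(y, 1)] \<and> (\<forall>p\<in>set ys. snd p = 0)" using h by auto
    next
      assume "\<exists>ys y. w = ys @ [(y, 1)] \<and> (\<forall>p\<in>set ys. snd p = 0)"
      then obtain ys y where h: "w = ys @ [(y, 1)]" "\<forall>p\<in>set ys. snd p = 0" by blast
      then show "\<exists>ys y. p # w = ys @ [(y, 1)] \<and> (\<forall>p\<in>set ys. snd p = 0)" using True
        by (intro exI[of _ "p # ys"] exI[of _ y]) auto
    qed
    ultimately show ?thesis using Cons.IH by simp
  next
    case False
    have r: "(\<exists>ys y. p # w = ys @ [(y, 1)] \<and> (\<forall>p\<in>set ys. snd p = 0)) \<longleftrightarrow> w = [] \<and> snd p = 1"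
    proof
      assume "\<exists>ys y. p # w = ys @ [(y, 1)] \<and> (\<forall>p\<in>set ys. snd p = 0)"
      then obtain ys y where h: "p # w = ys @ [(y, 1)]" "\<forall>p\<in>set ys. snd p = 0" by blast
      then have "ys = []" using False by (cases ys) auto
      then show "w = [] \<and> snd p = 1" using h by auto
    next
      assume "w = [] \<and> snd p = 1"
      then show "\<exists>ys y. p # w = ys @ [(y, 1)] \<and> (\<forall>p\<in>set ys. snd p = 0)"
        by (intro exI[of _ "[]"] exI[of _ "fst p"]) (cases p, auto)
    qed
    show ?thesis
    proof (cases "snd p = 1")
      case True
      then have "foldl (dstep k) 2 (p # w) = foldl (dstep k) 3 w" by (simp add: dstep_def)
      then show ?thesis using S3[of 3 k w] r True by (simp add: FF_def)
    next
      case F2: False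
      then have "foldl (dstep k) 2 (p # w) = 6" using False by (simp add: dstep_def fold6)
      then show ?thesis using r F2 by (simp add: FF_def)
    qed
  qed
qed

definition shape :: "nat \<Rightarrow> (nat \<times> nat) list \<Rightarrow> bool" where
  "shape k w \<longleftrightarrow> w = [(0, 1)] \<or> (k = 2 \<and> w = [(0, 1), (1, 0)]) \<or> (\<exists>a. a \<noteq> 0 \<and> w = [(a, 2)]) \<or>
     (\<exists>a ys y. a \<noteq> 0 \<and> w = (a, 1) # ys @ [(y, 1)] \<and> (\<forall>p\<in>set ys. snd p = 0))"

lemma S0: "foldl (dstep k) 0 w \<in> FF \<longleftrightarrow> shape k w"
proof (cases w)
  case Nil
  then show ?thesis by (simp add: FF_def shape_def)
next
  case (Cons p w')
  obtain a b where p: "p = (a, b)" by (cases p)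
  show ?thesis
  proof (cases "a = 0 \<and> b = 1")
    case True
    then show ?thesis using Cons p S1[of k w'] by (auto simp: dstep_def shape_def)
  next
    case F1: False
    show ?thesis
    proof (cases "a \<noteq> 0 \<and> b = 1")
      case True
      then show ?thesis using Cons p S2[of k w'] by (auto simp: dstep_def shape_def)
    next
      case F2: False
      show ?thesis
      proof (cases "a \<noteq> 0 \<and> b = 2")
        case True
        then show ?thesis using Cons p S3[of 4 k w'] by (auto simp: dstep_def shape_def FF_def)
      next
        case F3: False
        then show ?thesis using Cons p F1 F2 by (auto simp: dstep_def shape_def FF_def fold6)
      qed
    qed
  qed
qed



lemma dval_one_zeros: "dval k (1 # replicate r 0) = k ^ r"
proof (induction r)
  case (Suc r)
  have "1 # replicate (Suc r) 0 = (1 # replicate r 0) @ [0]" by (simp add: replicate_append_same)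
  then have "dval k (1 # replicate (Suc r) 0) = dval k (1 # replicate r 0) * k" by (metis dval_snoc add_0_right)
  then show ?case using Suc by (simp add: mult.commute)
qed (simp)

lemma pw_eq_len: "len k n = len k m \<Longrightarrow> pair_word k n m = zip (base_digits k n) (base_digits k m)"
  by (simp add: pair_word_def pad_to_def)

lemma pw_big:
  assumes k: "k \<ge> 2" and ds: "ds \<noteq> []" "hd ds \<noteq> 0" "\<forall>x\<in>set ds. x < k" and d: "length ds \<ge> 2"
  shows "pair_word k (dval k ds) (g_seq k k (dval k ds)) = zip ds (1 # replicate (length ds - 2) 0 @ [1])"
proof -
  define n where "n = dval k ds"
  have bn: "base_digits k n = ds" unfolding n_def using dval_bd[OF k] ds by blast
  have n0: "n > 0" using bn ds by (cases "n = 0") auto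
  have g: "g_seq k k n = 1 + k ^ (length ds - 1)" using g_len[OF k n0] bn by simp
  define es where "es = 1 # replicate (length ds - 2) 0 @ [1::nat]"
  have "dval k es = k ^ (length ds - 2) * k + 1"
    unfolding es_def using dval_snoc[of k "1 # replicate (length ds - 2) 0" 1] dval_one_zeros by simp
  also have "\<dots> = g_seq k k n" using g d
  proof -
    have "length ds - 1 = Suc (length ds - 2)" using d by simp
    then show ?thesis using g by (simp add: power_Suc2)
  qed
  finally have dv: "dval k es = g_seq k k n" .
  have "\<forall>x\<in>set es. x < k" unfolding es_def using k by auto
  moreover have "es \<noteq> []" "hd es \<noteq> 0" unfolding es_def by auto
  ultimately have "base_digits k (dval k es) = es" using dval_bd[OF k] by blast
  then have "base_digits k (g_seq k k n) = es" using dv by simp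
  moreover have "length es = length ds" unfolding es_def using d by simp
  ultimately show ?thesis using bn pw_eq_len[of k n "g_seq k k n"] unfolding n_def es_def by simp
qed



lemma bd_single: "k \<ge> 2 \<Longrightarrow> 0 < d \<Longrightarrow> d < k \<Longrightarrow> base_digits k d = [d]"
  using dval_bd[of k "[d]"] by simp

lemma dval_two: "dval k [a, b] = a * k + b"
  using dval_snoc[of k "[a]" b] by simp

lemma pw0: assumes k: "k \<ge> 2" shows "pair_word k 0 (g_seq k k 0) = [(0, 1)]"
proof -
  have "g_seq k k 0 = 1" by (simp add: g_seq_def)
  moreover have "base_digits k 1 = [1]" using bd_single[OF k] k by simp
  ultimately show ?thesis by (simp add: pair_word_def pad_to_def)
qed

lemma pw1: "pair_word 2 1 (g_seq 2 2 1) = [(0, 1), (1, 0)]"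
proof -
  have "base_digits 2 (dval 2 [1, 0]) = [1, 0]" by (rule dval_bd) auto
  then have b2: "base_digits 2 2 = [1, 0]" by (simp add: dval_two)
  have b1: "base_digits 2 1 = [1]" using bd_single[of 2 1] by simp
  have "g_seq 2 2 1 = 2" using g_len[of 2 1 2] b1 by simp
  then show ?thesis using b1 b2 by (simp add: pair_word_def pad_to_def)
qed

lemma fw: assumes k: "k \<ge> 2" shows "shape k (pair_word k n (g_seq k k n))"
proof (cases "n = 0")
  case True
  then show ?thesis using pw0[OF k] by (simp add: shape_def)
next
  case False
  then have n0: "n > 0" by simp
  show ?thesis
  proof (cases "n < k")
    case True
    have bn: "base_digits k n = [n]" using bd_single[OF k n0 True] .
    have g: "g_seq k k n = 2" using g_len[OF k n0, of k] bn by simp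
    show ?thesis
    proof (cases "k = 2")
      case True
      then have n1: "n = 1" using n0 \<open>n < k\<close> by simp
      then show ?thesis using True n1 pw1 by (simp add: shape_def)
    next
      case False
      then have "base_digits k 2 = [2]" using bd_single[OF k] k by simp
      then have "pair_word k n (g_seq k k n) = [(n, 2)]" using g bn by (simp add: pair_word_def pad_to_def)
      then show ?thesis using n0 unfolding shape_def by blast
    qed
  next
    case False
    define ds where "ds = base_digits k n"
    have d2: "length ds \<ge> 2" using bd_len_le_iff[OF k, of n 1] False unfolding ds_def by simp
    have ne: "ds \<noteq> []" using d2 by auto
    have hd: "hd ds \<noteq> 0" using bd_hd[OF k] ne unfolding ds_def by blast
    have dig: "\<forall>x\<in>set ds. x < k" using bd_digits[OF k] unfolding ds_def by blast
    have dv: "dval k ds = n" unfolding ds_def by (rule bd_dval[OF k])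
    have pw: "pair_word k n (g_seq k k n) = zip ds (1 # replicate (length ds - 2) 0 @ [1])"
      using pw_big[OF k ne hd dig d2] dv by simp
    obtain a rest where ar: "ds = a # rest" using ne by (cases ds) auto
    have rne: "rest \<noteq> []" using d2 ar by auto
    have rr: "rest = butlast rest @ [last rest]" using rne by simp
    have lb: "length (butlast rest) = length ds - 2" using ar by simp
    have zz: "zip ds (1 # replicate (length ds - 2) 0 @ [1]) =
        (a, 1) # zip (butlast rest) (replicate (length ds - 2) 0) @ [(last rest, 1)]"
      using ar lb by (subst ar, subst rr) (simp add: zip_append)
    have a0: "a \<noteq> 0" using hd ar by simp
    have zs: "\<forall>p\<in>set (zip (butlast rest) (replicate (length ds - 2) (0::nat))). snd p = 0"
      by (auto dest: set_zip_rightD)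
    have "\<exists>a ys y. a \<noteq> 0 \<and> pair_word k n (g_seq k k n) = (a, 1) # ys @ [(y, 1)] \<and> (\<forall>p\<in>set ys. snd p = 0)"
      apply (rule exI[of _ a], rule exI[of _ "zip (butlast rest) (replicate (length ds - 2) (0::nat))"], rule exI[of _ "last rest"])
      using a0 zs unfolding pw zz by simp
    then show ?thesis unfolding shape_def by (intro disjI2)
  qed
qed

lemma bw: assumes k: "k \<ge> 2" and sh: "shape k w" and al: "set w \<subseteq> {(a, b). a < k \<and> b < k}"
  shows "\<exists>n. w = pair_word k n (g_seq k k n)"
proof -
  consider "w = [(0, 1)]" | "k = 2 \<and> w = [(0, 1), (1, 0)]" | "\<exists>a. a \<noteq> 0 \<and> w = [(a, 2)]" |
    "\<exists>a ys y. a \<noteq> 0 \<and> w = (a, 1) # ys @ [(y, 1)] \<and> (\<forall>p\<in>set ys. snd p = 0)"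
    using sh unfolding shape_def by blast
  then show ?thesis
  proof cases
    case 1
    then show ?thesis using pw0[OF k] by metis
  next
    case 2
    then show ?thesis using pw1 by metis
  next
    case 3
    then obtain a where a: "a \<noteq> 0" "w = [(a, 2)]" by blast
    then have ak: "a < k" "2 < k" using al by auto
    have "g_seq k k a = 2" using g_len[OF k, of a k] bd_single[OF k _ ak(1)] a by simp
    then have "pair_word k a (g_seq k k a) = [(a, 2)]"
      using bd_single[OF k _ ak(1)] bd_single[OF k _ ak(2)] a by (simp add: pair_word_def pad_to_def)
    then show ?thesis using a by metis
  next
    case 4
    then obtain a ys y where h: "a \<noteq> 0" "w = (a, 1) # ys @ [(y, 1)]" "\<forall>p\<in>set ys. snd p = 0" by blast
    define ds where "ds = a # map fst ys @ [y]"
    have dig: "\<forall>x\<in>set ds. x < k" using al h unfolding ds_def by auto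
    have pw: "pair_word k (dval k ds) (g_seq k k (dval k ds)) = zip ds (1 # replicate (length ds - 2) 0 @ [1])"
      by (rule pw_big[OF k]) (use dig h in \<open>auto simp: ds_def\<close>)
    have rs: "replicate (length ys) (0::nat) = map snd ys"
      using h(3) replicate_length_same[of "map snd ys" 0] by simp
    have zz: "zip ds (1 # replicate (length ds - 2) 0 @ [1]) = (a, 1) # zip (map fst ys) (replicate (length ys) 0) @ [(y, 1)]"
      unfolding ds_def by (simp add: zip_append)
    also have "\<dots> = w" using h rs by (simp add: zip_map_fst_snd)
    finally show ?thesis using pw by metis
  qed
qed


lemma sufficiency: assumes k: "k \<ge> 2" shows "k_synchronized k (g_seq k k)"
  unfolding k_synchronized_def
proof (intro exI conjI)
  show "finite {0..6::nat}" by simp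
  show "(0::nat) \<in> {0..6}" by simp
  show "FF \<subseteq> {0..6}" by (auto simp: FF_def)
  show "\<forall>q\<in>{0..6}. \<forall>a<k. \<forall>b<k. dstep k q (a, b) \<in> {0..6}" by (auto simp: dstep_def)
  show "\<forall>w. set w \<subseteq> {(a, b). a < k \<and> b < k} \<longrightarrow>
         (foldl (dstep k) 0 w \<in> FF \<longleftrightarrow> (\<exists>n. w = pair_word k n (g_seq k k n)))"
    using S0 fw[OF k] bw[OF k] by metis
qed

theorem proposition7:
  fixes k l :: nat
  assumes "k \<ge> 2" and "l \<ge> 2"
  shows "k_synchronized k (g_seq k l) \<longleftrightarrow> k = l"
  using necessity[OF assms] sufficiency[OF assms(1)] by blast

end
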